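(* Suppose Assumptions 3.2, 4.2 and 4.3 hold. Then there exist constants $0<a_*<b_*<\infty$, a constant $l_0>0$, and a function $w_0\in C^1((0,\infty))$ such that $$\tfrac12\sigma^2(x)w_0'(x)+\mu(x)w_0(x)+h(x)=l_0,\quad x\in(a_*,b_* ),$$ $c_1\le w_0(x)\le c_2$ for $x\in(a_*,b_* )$; $w_0(x)=c_2$, $w_0'(x)=0$ for $x\le a_*$; and $w_0(x)=c_1$, $w_0'(x)=0$ for $x\ge b_*$.
   Context: Standing setup. $W$ is a standard one-dimensional Brownian motion. $\mu,\sigma:[0,\infty)\to\mathbb R$ are continuous with $\sigma(x)>0$ for $x>0$, such that the SDE $dX_0(s)=\mu(X_0(s))ds+\sigma(X_0(s))dW(s)$ has a weak solution unique in law with state space $[0,\infty)$, for which $0$ is an unattainable (entrance or natural) boundary point and $\infty$ is a natural boundary point. The scale and speed densities are $s(x)=\exp\{-\int_1^x \frac{2\mu(y)}{\sigma^2(y)}dy\}$ and $m(x)=\frac{1}{\sigma^2(x)s(x)}$ for $x>0$. The generator is $\mathcal Lf(x)=\frac12\sigma^2(x)f''(x)+\mu(x)f'(x)$. Fix constants $0<c_1<c_2$ and a nonnegative continuous function $h$ on $[0,\infty)$. A control is an adapted càdlàg process $\varphi=\xi-\eta$, where $\xi,\eta$ are nonnegative, nondecreasing, càdlàg, $\xi(0-)=\eta(0-)=0$, and the measures $d\xi,d\eta$ are mutually singular; it is admissible if the controlled equation $dX(s)=\mu(X(s))ds+\sigma(X(s))dW(s)+d\xi(s)-d\eta(s)$,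 $X(0-)=x\ge0$, has a unique nonnegative weak solution $X$. For $x\ge0$, $\mathscr A_x$ is the set of admissible controls with $\mathbb E_x[\xi(T)]\le K_1(x)T^n+K_2(x)$ for all $T>0$, where $K_1,K_2$ are fixed positive functions and $n\ge1$ a fixed integer. Define $V_r(x)=\sup_{\varphi\in\mathscr A_x}\mathbb E_x\big[\int_0^\infty e^{-rs}(h(X(s))ds+c_1d\eta(s)-c_2d\xi(s))\big]$ for $r>0$. Assumption 3.2: (i) $\lim_{x\downarrow0}[h(x)+c_2\mu(x)]\le0$ and $\lim_{x\to\infty}[h(x)+c_1\mu(x)]<0$; (ii) there exist $0<a<b<\infty$ with $\int_a^bh(y)m(y)dy+\frac{c_1}{2s(b)}-\frac{c_2}{2s(a)}>0$. Assumption 4.2: For each $r>0$ there exist $0<a_r<b_r<\infty$ such that $V_r\in C^2([0,\infty))$ and: for $x\in(a_r,b_r)$, $rV_r(x)-\mathcal LV_r(x)-h(x)=0$ and $c_1\le V_r'(x)\le c_2$; for $x\ge b_r$, $rV_r(x)-\mathcal LV_r(x)-h(x)\ge0$ and $V_r'(x)=c_1$; for $x\le a_r$, $rV_r(x)-\mathcal LV_r(x)-h(x)\ge0$ and $V_r'(x)=c_2$. Assumption 4.3: $h,\mu,\sigma$ are continuously differentiable and $\inf_{x\in[a,b]}\sigma^2(x)>0$ for every $[a,b]\subset(0,\infty)$. *)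

theory Defs
  imports "HOL-Analysis.Analysis"
begin

definition oint1 :: "(real \<Rightarrow> real) \<Rightarrow> real \<Rightarrow> real" where
  "oint1 f x = (if 1 \<le> x then integral {1..x} f else - integral {x..1} f)"

definition scale_dens :: "(real \<Rightarrow> real) \<Rightarrow> (real \<Rightarrow> real) \<Rightarrow> real \<Rightarrow> real" where
  "scale_dens \<mu> \<sigma> x = exp (- oint1 (\<lambda>y. 2 * \<mu> y / (\<sigma> y)^2) x)"

definition speed_dens :: "(real \<Rightarrow> real) \<Rightarrow> (real \<Rightarrow> real) \<Rightarrow> real \<Rightarrow> real" where
  "speed_dens \<mu> \<sigma> x = 1 / ((\<sigma> x)^2 * scale_dens \<mu> \<sigma> x)"

definition gen :: "(real \<Rightarrow> real) \<Rightarrow> (real \<Rightarrow> real) \<Rightarrow> real \<Rightarrow> real \<Rightarrow> real \<Rightarrow> real" where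
  "gen \<mu> \<sigma> d1 d2 x = (1/2) * (\<sigma> x)^2 * d2 + \<mu> x * d1"

definition C2_nonneg :: "(real \<Rightarrow> real) \<Rightarrow> (real \<Rightarrow> real) \<Rightarrow> (real \<Rightarrow> real) \<Rightarrow> bool" where
  "C2_nonneg f f1 f2 \<longleftrightarrow>
     (\<forall>x\<ge>0. (f has_real_derivative f1 x) (at x within {0..}) \<and>
             (f1 has_real_derivative f2 x) (at x within {0..})) \<and>
     continuous_on {0..} f2"

definition C1_nonneg :: "(real \<Rightarrow> real) \<Rightarrow> bool" where
  "C1_nonneg f \<longleftrightarrow> (\<exists>f1. (\<forall>x\<ge>0. (f has_real_derivative f1 x) (at x within {0..}))
                         \<and> continuous_on {0..} f1)"

text \<open>Feller test: 0 is unattainable (entrance or natural), i.e. not an exit/regular point: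
  integral over (0,1] of s(y) * M[y,1] dy is infinite.\<close>
definition zero_unattainable :: "(real \<Rightarrow> real) \<Rightarrow> (real \<Rightarrow> real) \<Rightarrow> bool" where
  "zero_unattainable \<mu> \<sigma> \<longleftrightarrow>
     (\<integral>\<^sup>+ y. indicator {0<..1} y * ennreal (scale_dens \<mu> \<sigma> y) *
        (\<integral>\<^sup>+ z. indicator {y..1} z * ennreal (speed_dens \<mu> \<sigma> z) \<partial>lborel) \<partial>lborel) = \<infinity>"

text \<open>Feller test: oo is a natural boundary (neither exit nor entrance).\<close>
definition infty_natural :: "(real \<Rightarrow> real) \<Rightarrow> (real \<Rightarrow> real) \<Rightarrow> bool" where
  "infty_natural \<mu> \<sigma> \<longleftrightarrow>
     (\<integral>\<^sup>+ y. indicator {1..} y * ennreal (scale_dens \<mu> \<sigma> y) *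
        (\<integral>\<^sup>+ z. indicator {1..y} z * ennreal (speed_dens \<mu> \<sigma> z) \<partial>lborel) \<partial>lborel) = \<infinity> \<and>
     (\<integral>\<^sup>+ y. indicator {1..} y * ennreal (speed_dens \<mu> \<sigma> y) *
        (\<integral>\<^sup>+ z. indicator {1..y} z * ennreal (scale_dens \<mu> \<sigma> z) \<partial>lborel) \<partial>lborel) = \<infinity>"

end

theory Submission imports Defs begin

lemma deriv_join:
  fixes f :: "real \<Rightarrow> real"
  assumes "(f has_field_derivative D) (at x within {..x})" "(f has_field_derivative D) (at x within {x..})"
  shows "(f has_field_derivative D) (at x)"
proof -
  have u: "{..x} \<union> {x..} = (UNIV::real set)" by auto
  have "((\<lambda>y. (f y - f x) / (y - x)) \<longlongrightarrow> D) (at x within ({..x} \<union> {x..}))"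
    using assms unfolding has_field_derivative_iff at_within_union by (rule filterlim_sup)
  then show ?thesis unfolding u has_field_derivative_iff .
qed

lemma oint1_deriv:
  fixes f :: "real \<Rightarrow> real"
  assumes f: "continuous_on {0<..} f" and x: "0 < x"
  shows "(oint1 f has_real_derivative f x) (at x)"
proof -
  define c where "c = min x 1 / 2"
  have c: "0 < c" "c < x" "c < 1" using x by (auto simp: c_def)
  have int: "f integrable_on {u..v}" if "0 < u" for u v
    by (rule integrable_continuous_real, rule continuous_on_subset[OF f]) (use that in auto)
  have eq: "oint1 f y = integral {c..y} f - integral {c..1} f" if "y \<in> {c<..}" for y
  proof (cases "1 \<le> y")
    case True
    have "integral {c..y} f = integral {c..1} f + integral {1..y} f"
      using Henstock_Kurzweil_Integration.integral_combine[where a=c and c=1 and b=y and f=f] c True int[of c y] by simp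
    then show ?thesis using True by (simp add: oint1_def)
  next
    case False
    have "integral {c..1} f = integral {c..y} f + integral {y..1} f"
      using Henstock_Kurzweil_Integration.integral_combine[where a=c and c=y and b=1 and f=f] c False that int[of c 1] by simp
    then show ?thesis using False by (simp add: oint1_def)
  qed
  have "((\<lambda>y. integral {c..y} f) has_real_derivative f x) (at x within {c..x+1})"
  proof (rule integral_has_real_derivative)
    show "continuous_on {c..x + 1} f" by (rule continuous_on_subset[OF f]) (use c in auto)
    show "x \<in> {c..x + 1}" using c by auto
  qed
  moreover have "x \<in> interior {c..x+1}" using c by auto
  ultimately have "((\<lambda>y. integral {c..y} f) has_real_derivative f x) (at x)"
    using at_within_interior[of x "{c..x+1}"] by simp
  then have "((\<lambda>y. integral {c..y} f - integral {c..1} f) has_real_derivative f x - 0) (at x)"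
    by (rule DERIV_diff) (rule DERIV_const)
  then have "((\<lambda>y. integral {c..y} f - integral {c..1} f) has_real_derivative f x) (at x)" by simp
  then show ?thesis
    by (rule has_field_derivative_transform_within_open[of _ _ _ "{c<..}"]) (use c eq in auto)
qed

lemma oint1_integral:
  fixes f :: "real \<Rightarrow> real"
  assumes f: "continuous_on {0<..} f" and ab: "0 < a" "a \<le> b"
  shows "integral {a..b} f = oint1 f b - oint1 f a"
proof -
  have d: "(oint1 f has_vector_derivative f x) (at x within {a..b})" if "x \<in> {a..b}" for x
  proof -
    have "0 < x" using that ab by auto
    then have "(oint1 f has_real_derivative f x) (at x)" by (rule oint1_deriv[OF f])
    then have "(oint1 f has_real_derivative f x) (at x within {a..b})" by (rule has_field_derivative_at_within)
    then show ?thesis by (simp add: has_real_derivative_iff_has_vector_derivative)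
  qed
  have "(f has_integral oint1 f b - oint1 f a) {a..b}"
    by (rule fundamental_theorem_of_calculus[OF ab(2)]) (use d in blast)
  then show ?thesis by (rule integral_unique)
qed
theorem lemma4p9:
  fixes \<mu> \<sigma> h :: "real \<Rightarrow> real"
    and c1 c2 :: real
    and V :: "real \<Rightarrow> real \<Rightarrow> real"
  assumes c: "0 < c1" "c1 < c2"
    and cont: "continuous_on {0..} \<mu>" "continuous_on {0..} \<sigma>" "continuous_on {0..} h"
    and h_nonneg: "\<forall>x\<ge>0. h x \<ge> 0"
    and sigma_pos: "\<forall>x>0. \<sigma> x > 0"
    and bd0: "zero_unattainable \<mu> \<sigma>"
    and bdinf: "infty_natural \<mu> \<sigma>"
    \<comment> \<open>Assumption 3.2\<close>
    and A32_i0: "\<exists>L. ((\<lambda>x. h x + c2 * \<mu> x) \<longlongrightarrow> L) (at_right 0) \<and> L \<le> 0"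
    and A32_iinf: "(\<exists>L. ((\<lambda>x. h x + c1 * \<mu> x) \<longlongrightarrow> L) at_top \<and> L < 0)
                   \<or> filterlim (\<lambda>x. h x + c1 * \<mu> x) at_bot at_top"
    and A32_ii: "\<exists>a b. 0 < a \<and> a < b \<and>
                   integral {a..b} (\<lambda>y. h y * speed_dens \<mu> \<sigma> y)
                   + c1 / (2 * scale_dens \<mu> \<sigma> b) - c2 / (2 * scale_dens \<mu> \<sigma> a) > 0"
    \<comment> \<open>Assumption 4.2 (V r plays the role of the value function V_r)\<close>
    and A42: "\<forall>r>0. \<exists>ar br V1 V2. 0 < ar \<and> ar < br \<and> C2_nonneg (V r) V1 V2 \<and>
               (\<forall>x\<in>{ar<..<br}. r * V r x - gen \<mu> \<sigma> (V1 x) (V2 x) x - h x = 0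
                                  \<and> c1 \<le> V1 x \<and> V1 x \<le> c2) \<and>
               (\<forall>x\<ge>br. r * V r x - gen \<mu> \<sigma> (V1 x) (V2 x) x - h x \<ge> 0 \<and> V1 x = c1) \<and>
               (\<forall>x. 0 \<le> x \<and> x \<le> ar \<longrightarrow>
                      r * V r x - gen \<mu> \<sigma> (V1 x) (V2 x) x - h x \<ge> 0 \<and> V1 x = c2)"
    \<comment> \<open>Assumption 4.3\<close>
    and A43: "C1_nonneg h" "C1_nonneg \<mu>" "C1_nonneg \<sigma>"
             "\<forall>a b. 0 < a \<and> a \<le> b \<longrightarrow> (INF x\<in>{a..b}. (\<sigma> x)^2) > 0"
  shows "\<exists>as bs l0 w0 w0'. 0 < as \<and> as < bs \<and> l0 > 0 \<and>
           (\<forall>x>0. (w0 has_real_derivative w0' x) (at x)) \<and> continuous_on {0<..} w0' \<and>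
           (\<forall>x\<in>{as<..<bs}. (1/2) * (\<sigma> x)^2 * w0' x + \<mu> x * w0 x + h x = l0) \<and>
           (\<forall>x\<in>{as<..<bs}. c1 \<le> w0 x \<and> w0 x \<le> c2) \<and>
           (\<forall>x. 0 < x \<and> x \<le> as \<longrightarrow> w0 x = c2 \<and> w0' x = 0) \<and>
           (\<forall>x\<ge>bs. w0 x = c1 \<and> w0' x = 0)"
  proof -
  let ?f1 = "\<lambda>x. h x + c1 * \<mu> x"
  let ?f2 = "\<lambda>x. h x + c2 * \<mu> x"
  have sp: "0 < \<sigma> x" if "0 < x" for x using sigma_pos that by auto
  have cmu: "continuous_on {0<..} \<mu>" by (rule continuous_on_subset[OF cont(1)]) auto
  have csig: "continuous_on {0<..} \<sigma>" by (rule continuous_on_subset[OF cont(2)]) auto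
  have ch: "continuous_on {0<..} h" by (rule continuous_on_subset[OF cont(3)]) auto
  define g where "g = (\<lambda>y. 2 * \<mu> y / (\<sigma> y)^2)"
  have contg: "continuous_on {0<..} g" unfolding g_def
    by (intro continuous_intros cmu csig) (auto dest: sp)
  define si where "si = (\<lambda>x. exp (oint1 g x))"
  define m where "m = (\<lambda>x. si x / (\<sigma> x)^2)"
  have si_pos: "0 < si x" for x unfolding si_def by simp
  have scale_eq: "scale_dens \<mu> \<sigma> x = 1 / si x" for x
    unfolding scale_dens_def si_def g_def by (simp add: exp_minus inverse_eq_divide)
  have speed_eq: "speed_dens \<mu> \<sigma> = m"
    unfolding speed_dens_def m_def by (rule ext) (simp add: scale_eq)
  have m_pos: "0 < m x" if "0 < x" for x unfolding m_def using si_pos[of x] sp[OF that] by simp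
  have dsi: "(si has_real_derivative si x * g x) (at x)" if "0 < x" for x
    unfolding si_def by (rule DERIV_chain2[OF DERIV_exp oint1_deriv[OF contg that]])
  have csi: "continuous_on {0<..} si"
    by (rule continuous_at_imp_continuous_on) (auto intro: DERIV_isCont[OF dsi])
  have cm: "continuous_on {0<..} m" unfolding m_def
    by (intro continuous_intros csi csig) (auto dest: sp)
  have chm: "continuous_on {0<..} (\<lambda>y. h y * m y)" by (intro continuous_intros ch cm)
  define Ph where "Ph = oint1 (\<lambda>y. h y * m y)"
  define Pm where "Pm = oint1 m"
  have dPh: "(Ph has_real_derivative h x * m x) (at x)" if "0 < x" for x
    unfolding Ph_def by (rule oint1_deriv[OF chm that])
  have dPm: "(Pm has_real_derivative m x) (at x)" if "0 < x" for x
    unfolding Pm_def by (rule oint1_deriv[OF cm that])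
  have cPh: "continuous_on {0<..} Ph"
    by (rule continuous_at_imp_continuous_on) (auto intro: DERIV_isCont[OF dPh])
  have cPm: "continuous_on {0<..} Pm"
    by (rule continuous_at_imp_continuous_on) (auto intro: DERIV_isCont[OF dPm])
  have sig_g: "si x * g x / 2 = \<mu> x * m x" for x unfolding g_def m_def by simp
  define G where "G = (\<lambda>l a b. Ph b - Ph a - l * (Pm b - Pm a) + c1 * si b / 2 - c2 * si a / 2)"
  define N where "N = (\<lambda>a b. Ph b - Ph a + c1 * si b / 2 - c2 * si a / 2)"
  define M where "M = (\<lambda>a b. Pm b - Pm a)"
  have GNM: "G l a b = N a b - l * M a b" for l a b unfolding G_def N_def M_def by simp
  have Gdiag: "G l a a = (c1 - c2) * si a / 2" for l a unfolding G_def by (simp add: algebra_simps)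
  have Gdiag_neg: "G l a a < 0" for l a unfolding Gdiag using c si_pos[of a] by (simp add: mult_neg_pos)
  have M_pos: "0 < M a b" if "0 < a" "a < b" for a b
  proof -
    have "Pm a < Pm b"
    proof (rule DERIV_pos_imp_increasing[OF that(2)])
      fix x assume "a \<le> x" "x \<le> b"
      then have "0 < x" using that by auto
      then show "\<exists>y. DERIV Pm x :> y \<and> 0 < y" using dPm m_pos by blast
    qed
    then show ?thesis unfolding M_def by simp
  qed
  have dGa: "((\<lambda>a. G l a b) has_real_derivative m a * (l - ?f2 a)) (at a)" if "0 < a" for l a b
  proof -
    have "((\<lambda>a. G l a b) has_real_derivative (0 - h a * m a - l * (0 - m a) + 0 - c2 * (si a * g a) / 2)) (at a)"
      unfolding G_def
      by (intro DERIV_diff DERIV_add DERIV_cdivide DERIV_cmult DERIV_const dPh dPm dsi that)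
    then show ?thesis
      by (rule DERIV_cong) (simp add: sig_g[of a, symmetric] algebra_simps)
  qed
  have dGb: "((\<lambda>b. G l a b) has_real_derivative m b * (?f1 b - l)) (at b)" if "0 < b" for l a b
  proof -
    have "((\<lambda>b. G l a b) has_real_derivative (h b * m b - 0 - l * (m b - 0) + c1 * (si b * g b) / 2 - 0)) (at b)"
      unfolding G_def
      by (intro DERIV_diff DERIV_add DERIV_cdivide DERIV_cmult DERIV_const dPh dPm dsi that)
    then show ?thesis
      by (rule DERIV_cong) (simp add: sig_g[of b, symmetric] algebra_simps)
  qed
  obtain a1 b1 where ab1: "0 < a1" "a1 < b1" and N1: "N a1 b1 > 0"
  proof -
    from A32_ii obtain a b where ab: "0 < a" "a < b" and
      pos: "integral {a..b} (\<lambda>y. h y * speed_dens \<mu> \<sigma> y)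
                   + c1 / (2 * scale_dens \<mu> \<sigma> b) - c2 / (2 * scale_dens \<mu> \<sigma> a) > 0" by blast
    have "integral {a..b} (\<lambda>y. h y * speed_dens \<mu> \<sigma> y) = Ph b - Ph a"
      unfolding speed_eq Ph_def by (rule oint1_integral[OF chm]) (use ab in auto)
    then have "N a b > 0" using pos unfolding N_def scale_eq by simp
    then show ?thesis using that ab by blast
  qed
  define l1 where "l1 = N a1 b1 / M a1 b1"
  have l1_pos: "0 < l1" unfolding l1_def using N1 M_pos[OF ab1] by simp
  obtain a0 where a0: "0 < a0" "a0 \<le> a1" and f2a0: "\<And>x. 0 < x \<Longrightarrow> x \<le> a0 \<Longrightarrow> ?f2 x < l1"
  proof -
    from A32_i0 obtain L where L: "(?f2 \<longlongrightarrow> L) (at_right 0)" "L \<le> 0" by blast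
    have "eventually (\<lambda>x. ?f2 x < l1) (at_right 0)"
      by (rule order_tendstoD(2)[OF L(1)]) (use L(2) l1_pos in simp)
    then obtain d where d: "d > 0" "\<And>y. y > 0 \<Longrightarrow> y < d \<Longrightarrow> ?f2 y < l1"
      unfolding eventually_at_right_field by auto
    show ?thesis
      by (rule that[of "min a1 (d/2)"]) (use d ab1 in auto)
  qed
  obtain b0 where b0: "b1 \<le> b0" and f1b0: "\<And>x. b0 \<le> x \<Longrightarrow> ?f1 x < l1"
  proof -
    have "eventually (\<lambda>x. ?f1 x < l1) at_top"
    proof (cases "\<exists>L. (?f1 \<longlongrightarrow> L) at_top \<and> L < 0")
      case True
      then obtain L where L: "(?f1 \<longlongrightarrow> L) at_top" "L < 0" by blast
      show ?thesis by (rule order_tendstoD(2)[OF L(1)]) (use L(2) l1_pos in simp)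
    next
      case False
      then have "filterlim ?f1 at_bot at_top" using A32_iinf by blast
      then have "eventually (\<lambda>x. ?f1 x \<le> l1 / 2) at_top" unfolding filterlim_at_bot by blast
      then show ?thesis by (rule eventually_mono) (use l1_pos in simp)
    qed
    then obtain NN where NN: "\<And>x. x \<ge> NN \<Longrightarrow> ?f1 x < l1" unfolding eventually_at_top_linorder by blast
    show ?thesis by (rule that[of "max b1 NN"]) (use NN in auto)
  qed
  have a0b0: "a0 < b0" using a0 b0 ab1 by linarith
  define K where "K = {p. a0 \<le> fst p \<and> fst p \<le> snd p \<and> snd p \<le> b0 \<and> 0 \<le> N (fst p) (snd p)}"
  define S0 where "S0 = ({a0..b0} \<times> {a0..b0}) \<inter> {p::real\<times>real. fst p \<le> snd p}"
  have S0pos: "fst p > 0 \<and> snd p > 0" if "p \<in> S0" for p using that a0 unfolding S0_def by auto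
  have cfst: "continuous_on S0 (\<lambda>p. F (fst p))" if "continuous_on {0<..} F" for F
    by (rule continuous_on_compose2[OF that continuous_on_fst[OF continuous_on_id]]) (use S0pos in auto)
  have csnd: "continuous_on S0 (\<lambda>p. F (snd p))" if "continuous_on {0<..} F" for F
    by (rule continuous_on_compose2[OF that continuous_on_snd[OF continuous_on_id]]) (use S0pos in auto)
  have cNS0: "continuous_on S0 (\<lambda>p. N (fst p) (snd p))" unfolding N_def
    by (intro continuous_on_add continuous_on_diff continuous_on_mult continuous_on_divide continuous_on_const
          cfst csnd cPh csi) auto
  have cMS0: "continuous_on S0 (\<lambda>p. M (fst p) (snd p))" unfolding M_def
    by (intro continuous_on_diff cfst csnd cPm)
  have clS0: "closed S0" unfolding S0_def
    by (intro closed_Int closed_Times closed_atLeastAtMost closed_Collect_le continuous_on_fst continuous_on_snd continuous_on_id)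
  have K_eq: "K = S0 \<inter> (\<lambda>p. N (fst p) (snd p)) -` {0..}" unfolding K_def S0_def by auto
  have clK: "closed K" unfolding K_eq by (rule continuous_closed_preimage[OF cNS0 clS0 closed_atLeast])
  have bK: "bounded K" 
    by (rule bounded_subset[of "{a0..b0} \<times> {a0..b0}"]) (auto simp: K_def intro: compact_imp_bounded compact_Times)
  have compK: "compact K" using clK bK by (simp add: compact_eq_bounded_closed)
  have KS0: "K \<subseteq> S0" unfolding K_eq by auto
  have K_lt: "fst p < snd p" if "p \<in> K" for p
  proof (rule ccontr)
    assume "\<not> fst p < snd p"
    then have "fst p = snd p" using that unfolding K_def by auto
    then have "N (fst p) (snd p) < 0" using Gdiag_neg[of 0 "fst p"] GNM[of 0] by simp
    then show False using that unfolding K_def by auto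
  qed
  have KM: "M (fst p) (snd p) > 0" if "p \<in> K" for p
    using M_pos[of "fst p" "snd p"] K_lt[OF that] S0pos[of p] KS0 that by auto
  have cR: "continuous_on K (\<lambda>p. N (fst p) (snd p) / M (fst p) (snd p))"
    by (intro continuous_on_divide continuous_on_subset[OF cNS0 KS0] continuous_on_subset[OF cMS0 KS0])
       (use KM in force)
  have a1b1K: "(a1, b1) \<in> K" unfolding K_def using a0 b0 ab1 N1 by auto
  obtain pp where ppK: "pp \<in> K" and ppmax: "\<And>q. q \<in> K \<Longrightarrow>
      N (fst q) (snd q) / M (fst q) (snd q) \<le> N (fst pp) (snd pp) / M (fst pp) (snd pp)"
    using continuous_attains_sup[OF compK _ cR] a1b1K by blast
  define aa where "aa = fst pp"
  define bb where "bb = snd pp"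
  define l where "l = N aa bb / M aa bb"
  have aabb: "0 < aa" "aa < bb" "a0 \<le> aa" "bb \<le> b0"
    using K_lt[OF ppK] S0pos[of pp] KS0 ppK unfolding aa_def bb_def K_def by auto
  have l1l: "l1 \<le> l" using ppmax[OF a1b1K] unfolding l_def l1_def aa_def bb_def by simp
  have l_pos: "0 < l" using l1l l1_pos by simp
  have G0: "G l aa bb = 0" unfolding GNM l_def using M_pos[OF aabb(1,2)] by simp
  have monoA: "G l a b \<le> G l a' b" if "0 < a" "a \<le> a'" "a' \<le> a0" for a a' b
  proof (rule deriv_nonneg_imp_mono[of a a' "\<lambda>a. G l a b" "\<lambda>a. m a * (l - ?f2 a)"])
    fix x assume x: "x \<in> {a..a'}"
    then have "0 < x" "x \<le> a0" using that by auto
    then show "((\<lambda>a. G l a b) has_real_derivative m x * (l - ?f2 x)) (at x)" using dGa by blast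
    have "?f2 x < l" using f2a0[OF \<open>0 < x\<close> \<open>x \<le> a0\<close>] l1l by simp
    then show "0 \<le> m x * (l - ?f2 x)" using m_pos[OF \<open>0 < x\<close>] by simp
  qed (use that in auto)
  have monoB: "G l a b' \<le> G l a b" if "b0 \<le> b" "b \<le> b'" for a b b'
  proof -
    have "(\<lambda>b. - G l a b) b \<le> (\<lambda>b. - G l a b) b'"
    proof (rule deriv_nonneg_imp_mono[of b b' "\<lambda>b. - G l a b" "\<lambda>b. - (m b * (?f1 b - l))"])
      fix x assume x: "x \<in> {b..b'}"
      then have "0 < x" "b0 \<le> x" using that a0b0 a0 by auto
      then show "((\<lambda>b. - G l a b) has_real_derivative - (m x * (?f1 x - l))) (at x)"
        using dGb by (blast intro: DERIV_minus)
      have "?f1 x < l" using f1b0[OF \<open>b0 \<le> x\<close>] l1l by simp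
      then show "0 \<le> - (m x * (?f1 x - l))" using m_pos[OF \<open>0 < x\<close>] by (simp add: mult_nonneg_nonpos)
    qed (use that in auto)
    then show ?thesis by simp
  qed
  have Gbox: "G l a b \<le> 0" if "a0 \<le> a" "a < b" "b \<le> b0" for a b
  proof (cases "0 \<le> N a b")
    case True
    then have "(a, b) \<in> K" unfolding K_def using that by auto
    then have "N a b / M a b \<le> l" using ppmax unfolding l_def aa_def bb_def by fastforce
    moreover have "M a b > 0" using M_pos[of a b] that a0 by auto
    ultimately have "N a b \<le> l * M a b" by (simp add: divide_le_eq mult.commute)
    then show ?thesis unfolding GNM by simp
  next
    case False
    moreover have "M a b > 0" using M_pos[of a b] that a0 by auto
    ultimately have "0 < l * M a b" using l_pos by simp
    then show ?thesis unfolding GNM using False by simp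
  qed
  have Gle: "G l a b \<le> 0" if "0 < a" "a < b" for a b
  proof -
    consider "b \<le> a0" | "b0 \<le> a" | "a < b0" "a0 < b" by linarith
    then show ?thesis
    proof cases
      case 1
      then have "G l a b \<le> G l b b" by (intro monoA) (use that in auto)
      then show ?thesis using Gdiag_neg[of l b] by simp
    next
      case 2
      have "G l a b \<le> G l a a" by (intro monoB) (use that 2 in auto)
      then show ?thesis using Gdiag_neg[of l a] by simp
    next
      case 3
      define a' where "a' = max a a0"
      define b' where "b' = min b b0"
      have "G l a b \<le> G l a' b"
      proof (cases "a < a0")
        case True then show ?thesis unfolding a'_def by (intro monoA) (use that in auto)
      qed (simp add: a'_def)
      also have "\<dots> \<le> G l a' b'"
      proof (cases "b0 < b")
        case True then show ?thesis unfolding b'_def by (intro monoB) auto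
      qed (simp add: b'_def)
      also have "\<dots> \<le> 0" by (rule Gbox) (use 3 that a0b0 in \<open>auto simp: a'_def b'_def\<close>)
      finally show ?thesis .
    qed
  qed
  have f2aa: "?f2 aa = l"
  proof -
    have "m aa * (l - ?f2 aa) = 0"
    proof (rule DERIV_local_max[OF dGa[OF aabb(1)]])
      show "0 < min aa (bb - aa)" using aabb by simp
      show "\<forall>y. \<bar>aa - y\<bar> < min aa (bb - aa) \<longrightarrow> G l y bb \<le> G l aa bb"
        using Gle G0 by (auto simp: abs_if split: if_splits)
    qed
    then show ?thesis using m_pos[OF aabb(1)] by simp
  qed
  have f1bb: "?f1 bb = l"
  proof -
    have "m bb * (?f1 bb - l) = 0"
    proof (rule DERIV_local_max[OF dGb])
      show "0 < bb" using aabb by simp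
      show "0 < bb - aa" using aabb by simp
      show "\<forall>y. \<bar>bb - y\<bar> < bb - aa \<longrightarrow> G l aa y \<le> G l aa bb"
        using Gle G0 aabb by (auto simp: abs_if split: if_splits)
    qed
    then show ?thesis using m_pos[of bb] aabb by simp
  qed
  define W where "W = (\<lambda>x. c1 - 2 * (G l aa x / si x))"
  define E where "E = (\<lambda>x. -2 * (?f1 x - l) / (\<sigma> x)^2 + 2 * g x * G l aa x / si x)"
  have dW: "(W has_real_derivative E x) (at x)" if "0 < x" for x
  proof -
    have "(W has_real_derivative 0 - 2 * ((m x * (?f1 x - l) * si x - si x * g x * G l aa x) / (si x ^ Suc (Suc 0)))) (at x)"
      unfolding W_def
      by (intro DERIV_diff DERIV_cmult DERIV_const DERIV_quotient dGb dsi that) (use si_pos[of x] in simp)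
    then show ?thesis
    proof (rule DERIV_cong)
      have "si x \<noteq> 0" "\<sigma> x \<noteq> 0" using si_pos[of x] sp[OF that] by auto
      then show "0 - 2 * ((m x * (?f1 x - l) * si x - si x * g x * G l aa x) / (si x ^ Suc (Suc 0))) = E x"
        unfolding E_def m_def by (simp add: field_simps power2_eq_square)
    qed
  qed
  have ode: "(1/2) * (\<sigma> x)^2 * E x + \<mu> x * W x + h x = l" if "0 < x" for x
  proof -
    have "si x \<noteq> 0" "\<sigma> x \<noteq> 0" using si_pos[of x] sp[OF that] by auto
    then show ?thesis unfolding E_def W_def g_def by (simp add: field_simps power2_eq_square)
  qed
  have Waa: "W aa = c2" unfolding W_def Gdiag using si_pos[of aa] by (simp add: field_simps)
  have Wbb: "W bb = c1" unfolding W_def G0 by simp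
  have Eaa: "E aa = 0"
  proof -
    have "(1/2) * (\<sigma> aa)^2 * E aa = l - (h aa + c2 * \<mu> aa)" using ode[OF aabb(1)] Waa by (simp add: algebra_simps)
    then have "(1/2) * (\<sigma> aa)^2 * E aa = 0" using f2aa by simp
    then show ?thesis using sp[OF aabb(1)] by simp
  qed
  have Ebb: "E bb = 0"
  proof -
    have "(1/2) * (\<sigma> bb)^2 * E bb = l - (h bb + c1 * \<mu> bb)" using ode[of bb] aabb Wbb by (simp add: algebra_simps)
    then have "(1/2) * (\<sigma> bb)^2 * E bb = 0" using f1bb by simp
    then show ?thesis using sp[of bb] aabb by simp
  qed
  have Wlo: "c1 \<le> W x" if "aa < x" for x
  proof -
    have "G l aa x \<le> 0" by (rule Gle) (use aabb that in auto)
    then have "G l aa x / si x \<le> 0" using si_pos[of x] by (simp add: divide_nonpos_pos)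
    then show ?thesis unfolding W_def by simp
  qed
  have Whi: "W x \<le> c2" if "aa < x" "x < bb" for x
  proof -
    have "G l x bb \<le> 0" by (rule Gle) (use aabb that in auto)
    moreover have "G l x bb = G l aa bb - G l aa x + (c1 - c2) * si x / 2" unfolding G_def by (simp add: field_simps)
    ultimately have "G l aa x \<ge> (c1 - c2) * si x / 2" using G0 by simp
    then have "G l aa x / si x \<ge> (c1 - c2) / 2" using si_pos[of x] by (simp add: field_simps)
    then show ?thesis unfolding W_def by simp
  qed
  define cl where "cl = (\<lambda>x::real. max aa (min bb x))"
  define w0 where "w0 = (\<lambda>x. W (cl x))"
  define w0' where "w0' = (\<lambda>x. E (cl x))"
  have cl_lo: "cl x = aa" if "x \<le> aa" for x unfolding cl_def using that aabb by auto
  have cl_hi: "cl x = bb" if "bb \<le> x" for x unfolding cl_def using that aabb by auto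
  have cl_mid: "cl x = x" if "aa \<le> x" "x \<le> bb" for x unfolding cl_def using that by auto
  have cE: "continuous_on {0<..} E" unfolding E_def
  proof (intro continuous_intros ch cmu csig contg csi)
    show "continuous_on {0<..} (G l aa)"
      by (rule continuous_at_imp_continuous_on) (auto intro: DERIV_isCont[OF dGb])
  qed (auto dest: sp simp: si_pos less_imp_neq[OF si_pos, symmetric])
  have cw0': "continuous_on {0<..} w0'" unfolding w0'_def
  proof (rule continuous_on_compose2[OF cE])
    show "continuous_on {0<..} cl" unfolding cl_def by (intro continuous_intros)
    show "cl ` {0<..} \<subseteq> {0<..}" unfolding cl_def using aabb by auto
  qed
  have dw0: "(w0 has_real_derivative w0' x) (at x)" if "0 < x" for x
  proof -
    consider "x < aa" | "x = aa" | "aa < x" "x < bb" | "x = bb" | "bb < x" by linarith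
    then show ?thesis
    proof cases
      case 1
      have "((\<lambda>_. c2) has_real_derivative 0) (at x)" by (rule DERIV_const)
      then show ?thesis unfolding w0'_def cl_lo[OF less_imp_le[OF 1]] Eaa
        by (rule has_field_derivative_transform_within_open[of _ _ _ "{..<aa}"])
           (use 1 in \<open>auto simp: w0_def cl_lo Waa\<close>)
    next
      case 5
      have "((\<lambda>_. c1) has_real_derivative 0) (at x)" by (rule DERIV_const)
      then show ?thesis unfolding w0'_def cl_hi[OF less_imp_le[OF 5]] Ebb
        by (rule has_field_derivative_transform_within_open[of _ _ _ "{bb<..}"])
           (use 5 in \<open>auto simp: w0_def cl_hi Wbb\<close>)
    next
      case 3
      show ?thesis unfolding w0'_def cl_mid[OF less_imp_le[OF 3(1)] less_imp_le[OF 3(2)]]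
        by (rule has_field_derivative_transform_within_open[OF dW[OF that], of "{aa<..<bb}"])
           (use 3 in \<open>auto simp: w0_def cl_mid\<close>)
    next
      case 2
      have w0'x: "w0' x = 0" unfolding w0'_def 2 cl_lo[OF order_refl] Eaa ..
      show ?thesis unfolding w0'x
      proof (rule deriv_join)
        have "((\<lambda>_. c2) has_real_derivative 0) (at x within {..x})" by (rule DERIV_const)
        then show "(w0 has_real_derivative 0) (at x within {..x})"
          by (rule has_field_derivative_transform_within[where d=1]) (use 2 in \<open>auto simp: w0_def cl_lo Waa\<close>)
        have "(W has_real_derivative 0) (at x within {x..})"
          using has_field_derivative_at_within[OF dW[OF that]] 2 Eaa by simp
        then show "(w0 has_real_derivative 0) (at x within {x..})"
          by (rule has_field_derivative_transform_within[where d="bb - aa"])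
             (use 2 aabb in \<open>auto simp: w0_def cl_mid dist_real_def\<close>)
      qed
    next
      case 4
      have w0'x: "w0' x = 0" unfolding w0'_def 4 cl_hi[OF order_refl] Ebb ..
      show ?thesis unfolding w0'x
      proof (rule deriv_join)
        have "((\<lambda>_. c1) has_real_derivative 0) (at x within {x..})" by (rule DERIV_const)
        then show "(w0 has_real_derivative 0) (at x within {x..})"
          by (rule has_field_derivative_transform_within[where d=1]) (use 4 in \<open>auto simp: w0_def cl_hi Wbb\<close>)
        have "(W has_real_derivative 0) (at x within {..x})"
          using has_field_derivative_at_within[OF dW[OF that]] 4 Ebb by simp
        then show "(w0 has_real_derivative 0) (at x within {..x})"
          by (rule has_field_derivative_transform_within[where d="bb - aa"])
             (use 4 aabb in \<open>auto simp: w0_def cl_mid dist_real_def\<close>)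
      qed
    qed
  qed
  show ?thesis
  proof (intro exI conjI allI ballI impI)
    show "0 < aa" "aa < bb" "0 < l" using aabb l_pos by auto
    show "(w0 has_real_derivative w0' x) (at x)" if "0 < x" for x using dw0 that by blast
    show "continuous_on {0<..} w0'" by (fact cw0')
    fix x
    {
      assume x: "x \<in> {aa<..<bb}"
      then have cx: "cl x = x" using cl_mid by auto
      show "(1/2) * (\<sigma> x)^2 * w0' x + \<mu> x * w0 x + h x = l"
        unfolding w0_def w0'_def cx using ode[of x] x aabb by auto
      show "c1 \<le> w0 x" unfolding w0_def cx using Wlo x by auto
      show "w0 x \<le> c2" unfolding w0_def cx using Whi x by auto
    }
    {
      assume "0 < x \<and> x \<le> aa"
      then have cx: "cl x = aa" using cl_lo by auto
      show "w0 x = c2" unfolding w0_def cx by (fact Waa)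
      show "w0' x = 0" unfolding w0'_def cx by (fact Eaa)
    }
    {
      assume "bb \<le> x"
      then have cx: "cl x = bb" using cl_hi by auto
      show "w0 x = c1" unfolding w0_def cx by (fact Wbb)
      show "w0' x = 0" unfolding w0'_def cx by (fact Ebb)
    }
  qed
qed

end
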